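(* Let $P$ be a finite poset, $R$ a commutative unital ring, and $D$ a derivation of $I^3(P,R)$. Then for all $x<y$ in $P$, $$D(e_{xyy})=\sum_{v\in P,\ y<v}D(e_y)(y,y,v)\,e_{xyv}+\sum_{u\in P,\ u\le y}D(e_{xyy})(u,y,y)\,e_{uyy},$$ $$D(e_{xxy})=\sum_{v\in P,\ x\le v}D(e_{xxy})(x,x,v)\,e_{xxv}+\sum_{u\in P,\ u<x}D(e_x)(u,x,x)\,e_{uxy}.$$
   Context: For a finite poset $P$, $P^3_\le=\{(x,y,z)\in P^3: x\le y\le z\}$, and $I^3(P,R)$ is the $R$-module of functions $f:P^3_\le\to R$ with multiplication $(fg)(x_1,x_2,x_3)=\sum f(x_1,y_1,y_2)g(y_1,y_2,x_3)$ over all $x_1\le y_1\le x_2\le y_2\le x_3$. For $x\le y\le z$, $e_{xyz}$ is the function equal to $1$ at $(x,y,z)$ and $0$ elsewhere, and $e_x:=e_{xxx}$. A derivation is an $R$-linear map $D:I^3(P,R)\to I^3(P,R)$ with $D(fg)=D(f)g+fD(g)$. *)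

theory Defs
  imports Main
begin

text \<open>The finite poset P is the finite ordered type 'a. Elements of I^3(P,R) are functions
  'a \<Rightarrow> 'a \<Rightarrow> 'a \<Rightarrow> 'r vanishing outside P^3_le = {(x,y,z). x \<le> y \<le> z}.\<close>

type_synonym ('a, 'r) inc3 = "'a \<Rightarrow> 'a \<Rightarrow> 'a \<Rightarrow> 'r"

definition I3 :: "('a::{finite,order}, 'r::comm_ring_1) inc3 set" where
  "I3 = {f. \<forall>x y z. \<not> (x \<le> y \<and> y \<le> z) \<longrightarrow> f x y z = 0}"

definition mult3 :: "('a::{finite,order}, 'r::comm_ring_1) inc3 \<Rightarrow> ('a, 'r) inc3 \<Rightarrow> ('a, 'r) inc3" where
  "mult3 f g = (\<lambda>x1 x2 x3. \<Sum>(y1, y2) \<in> {(y1, y2). x1 \<le> y1 \<and> y1 \<le> x2 \<and> x2 \<le> y2 \<and> y2 \<le> x3}.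
       f x1 y1 y2 * g y1 y2 x3)"

definition e3 :: "'a \<Rightarrow> 'a \<Rightarrow> 'a \<Rightarrow> ('a::{finite,order}, 'r::comm_ring_1) inc3" where
  "e3 x y z = (\<lambda>a b c. if a = x \<and> b = y \<and> c = z then 1 else 0)"

definition derivation3 :: "(('a::{finite,order}, 'r::comm_ring_1) inc3 \<Rightarrow> ('a, 'r) inc3) \<Rightarrow> bool" where
  "derivation3 D \<longleftrightarrow>
     (\<forall>f \<in> I3. D f \<in> I3) \<and>
     (\<forall>f \<in> I3. \<forall>g \<in> I3. D (\<lambda>a b c. f a b c + g a b c) = (\<lambda>a b c. D f a b c + D g a b c)) \<and>
     (\<forall>r. \<forall>f \<in> I3. D (\<lambda>a b c. r * f a b c) = (\<lambda>a b c. r * D f a b c)) \<and>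
     (\<forall>f \<in> I3. \<forall>g \<in> I3. D (mult3 f g) = (\<lambda>a b c. mult3 (D f) g a b c + mult3 f (D g) a b c))"

end

theory Submission
  imports Defs
begin

lemma e3_I3: "x \<le> y \<Longrightarrow> y \<le> z \<Longrightarrow> e3 x y z \<in> I3"
  by (auto simp: I3_def e3_def)

lemma sum_e3_pt:
  fixes h :: "'a::{finite,order} \<Rightarrow> 'r::comm_ring_1"
  shows "(\<Sum>u \<in> S. h u * (if a = u \<and> P then 1 else 0)) = (if a \<in> S \<and> P then h a else 0)"
proof -
  have "(\<Sum>u \<in> S. h u * (if a = u \<and> P then 1 else 0)) = (\<Sum>u \<in> S. if u = a then (if P then h a else 0) else 0)"
    by (rule sum.cong) auto
  also have "\<dots> = (if a \<in> S \<and> P then h a else 0)" by (simp add: sum.delta')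
  finally show ?thesis .
qed

lemma multA:
  fixes f :: "('a::{finite,order}, 'r::comm_ring_1) inc3"
  assumes "x \<le> y"
  shows "mult3 f (e3 x x y) = (\<lambda>a b c. \<Sum>u\<in>{u. u \<le> x}. f u x x * e3 u x y a b c)"
proof (rule ext)+
  fix a b c :: 'a
  let ?S = "{(y1, y2). a \<le> y1 \<and> y1 \<le> b \<and> b \<le> y2 \<and> y2 \<le> c}"
  have "mult3 f (e3 x x y) a b c = (\<Sum>p\<in>?S. if p = (x,x) then (if c = y then f a x x else 0) else 0)"
    unfolding mult3_def e3_def by (rule sum.cong) (auto split: if_splits)
  also have "\<dots> = (if a \<le> x \<and> b = x \<and> c = y then f a x x else 0)"
    using assms by (auto simp: sum.delta')
  also have "\<dots> = (\<Sum>u\<in>{u. u \<le> x}. f u x x * e3 u x y a b c)"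
    unfolding e3_def using sum_e3_pt[where h="\<lambda>u. f u x x" and S="{u. u \<le> x}" and a=a and P="b = x \<and> c = y"]
    by (simp add: conj_assoc)
  finally show "mult3 f (e3 x x y) a b c = (\<Sum>u\<in>{u. u \<le> x}. f u x x * e3 u x y a b c)" .
qed

lemma multB:
  fixes g :: "('a::{finite,order}, 'r::comm_ring_1) inc3"
  assumes "x \<le> y"
  shows "mult3 (e3 x y y) g = (\<lambda>a b c. \<Sum>v\<in>{v. y \<le> v}. g y y v * e3 x y v a b c)"
proof (rule ext)+
  fix a b c :: 'a
  let ?S = "{(y1, y2). a \<le> y1 \<and> y1 \<le> b \<and> b \<le> y2 \<and> y2 \<le> c}"
  have "mult3 (e3 x y y) g a b c = (\<Sum>p\<in>?S. if p = (y,y) then (if a = x then g y y c else 0) else 0)"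
    unfolding mult3_def e3_def by (rule sum.cong) (auto split: if_splits)
  also have "\<dots> = (if a = x \<and> b = y \<and> y \<le> c then g y y c else 0)"
    using assms by (auto simp: sum.delta')
  also have "\<dots> = (\<Sum>v\<in>{v. y \<le> v}. g y y v * e3 x y v a b c)"
  proof -
    have "(\<Sum>v\<in>{v. y \<le> v}. g y y v * e3 x y v a b c) = (\<Sum>v\<in>{v. y \<le> v}. g y y v * (if c = v \<and> (a = x \<and> b = y) then 1 else 0))"
      unfolding e3_def by (rule sum.cong) auto
    also have "\<dots> = (if c \<in> {v. y \<le> v} \<and> (a = x \<and> b = y) then g y y c else 0)"
      by (rule sum_e3_pt)
    finally show ?thesis by auto
  qed
  finally show "mult3 (e3 x y y) g a b c = (\<Sum>v\<in>{v. y \<le> v}. g y y v * e3 x y v a b c)" .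
qed

lemma e3_eval: "e3 x y z a b c = (if a = x \<and> b = y \<and> c = z then 1 else 0)"
  by (simp add: e3_def)

lemma idem1: "x \<le> y \<Longrightarrow> mult3 (e3 x y y) (e3 y y y) = (e3 x y y :: ('a::{finite,order}, 'r::comm_ring_1) inc3)"
proof -
  assume h: "x \<le> y"
  have *: "\<And>a b c. (\<Sum>v\<in>{v. y \<le> v}. e3 y y y y y v * e3 x y v a b c) = (e3 x y y a b c :: 'r)"
  proof -
    fix a b c
    have "(\<Sum>v\<in>{v. y \<le> v}. e3 y y y y y v * e3 x y v a b c) = (\<Sum>v\<in>{v. y \<le> v}. if v = y then e3 x y y a b c else (0::'r))"
      by (rule sum.cong) (auto simp: e3_eval)
    then show "?thesis a b c" by (simp add: sum.delta')
  qed
  show ?thesis unfolding multB[OF h] by (intro ext) (rule *)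
qed

lemma idem2: "x \<le> y \<Longrightarrow> mult3 (e3 x x x) (e3 x x y) = (e3 x x y :: ('a::{finite,order}, 'r::comm_ring_1) inc3)"
proof -
  assume h: "x \<le> y"
  have *: "\<And>a b c. (\<Sum>u\<in>{u. u \<le> x}. e3 x x x u x x * e3 u x y a b c) = (e3 x x y a b c :: 'r)"
  proof -
    fix a b c
    have "(\<Sum>u\<in>{u. u \<le> x}. e3 x x x u x x * e3 u x y a b c) = (\<Sum>u\<in>{u. u \<le> x}. if u = x then e3 x x y a b c else (0::'r))"
      by (rule sum.cong) (auto simp: e3_eval)
    then show "?thesis a b c" by (simp add: sum.delta')
  qed
  show ?thesis unfolding multA[OF h] by (intro ext) (rule *)
qed

lemma Dediag:
  fixes D :: "('a::{finite,order}, 'r::comm_ring_1) inc3 \<Rightarrow> ('a, 'r) inc3"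
  assumes "derivation3 D"
  shows "D (e3 y y y) y y y = 0"
proof -
  let ?d = "D (e3 y y y)"
  have I: "e3 y y y \<in> I3" by (rule e3_I3) auto
  have "?d = D (mult3 (e3 y y y) (e3 y y y))" by (rule arg_cong[where f=D, OF idem1[of y y, symmetric]]) simp
  also have "\<dots> = (\<lambda>a b c. mult3 ?d (e3 y y y) a b c + mult3 (e3 y y y) ?d a b c)"
    using assms I unfolding derivation3_def by blast
  finally have E: "?d = (\<lambda>a b c. mult3 ?d (e3 y y y) a b c + mult3 (e3 y y y) ?d a b c)" .
  have E1: "?d y y y = mult3 ?d (e3 y y y) y y y + mult3 (e3 y y y) ?d y y y"
    by (rule fun_cong[OF fun_cong[OF fun_cong[OF E]], of y y y])
  have E2: "mult3 ?d (e3 y y y) y y y = (\<Sum>u\<in>{u. u \<le> y}. if u = y then ?d y y y else 0)"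
    unfolding multA[where x=y and y=y, OF order_refl] by (rule sum.cong) (auto simp: e3_eval)
  have E3: "mult3 (e3 y y y) ?d y y y = (\<Sum>v\<in>{v. y \<le> v}. if v = y then ?d y y y else 0)"
    unfolding multB[where x=y and y=y, OF order_refl] by (rule sum.cong) (auto simp: e3_eval)
  have "?d y y y = ?d y y y + ?d y y y" using E1 unfolding E2 E3 by (simp add: sum.delta')
  then show ?thesis by simp
qed

theorem lemma4p2:
  fixes D :: "('a::{finite,order}, 'r::comm_ring_1) inc3 \<Rightarrow> ('a, 'r) inc3"
    and x y :: 'a
  assumes "derivation3 D" and "x < y"
  shows "(D (e3 x y y) = (\<lambda>a b c.
            (\<Sum>v \<in> {v. y < v}. D (e3 y y y) y y v * e3 x y v a b c)
          + (\<Sum>u \<in> {u. u \<le> y}. D (e3 x y y) u y y * e3 u y y a b c))) \<and>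
         (D (e3 x x y) = (\<lambda>a b c.
            (\<Sum>v \<in> {v. x \<le> v}. D (e3 x x y) x x v * e3 x x v a b c)
          + (\<Sum>u \<in> {u. u < x}. D (e3 x x x) u x x * e3 u x y a b c)))"
proof
  have xy: "x \<le> y" using assms(2) by simp
  have ins1: "{v. y \<le> v} = insert y {v. y < v}" by auto
  have ins2: "{u. u \<le> x} = insert x {u. u < x}" by auto
  have Ixyy: "e3 x y y \<in> I3" "e3 y y y \<in> I3" "e3 x x y \<in> I3" "e3 x x x \<in> I3"
    using xy by (auto intro: e3_I3)
  have prod: "\<And>f g. f \<in> I3 \<Longrightarrow> g \<in> I3 \<Longrightarrow> D (mult3 f g) = (\<lambda>a b c. mult3 (D f) g a b c + mult3 f (D g) a b c)"
    using assms(1) unfolding derivation3_def by blast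
  have "D (e3 x y y) = D (mult3 (e3 x y y) (e3 y y y))" by (rule arg_cong[where f=D, OF idem1[OF xy, symmetric]])
  also have "\<dots> = (\<lambda>a b c. mult3 (D (e3 x y y)) (e3 y y y) a b c + mult3 (e3 x y y) (D (e3 y y y)) a b c)"
    using prod Ixyy by blast
  also have "\<dots> = (\<lambda>a b c.
            (\<Sum>v \<in> {v. y < v}. D (e3 y y y) y y v * e3 x y v a b c)
          + (\<Sum>u \<in> {u. u \<le> y}. D (e3 x y y) u y y * e3 u y y a b c))"
    unfolding multA[where x=y and y=y, OF order_refl] multB[OF xy] ins1
    by (simp add: Dediag[OF assms(1)] add.commute)
  finally show "D (e3 x y y) = (\<lambda>a b c.
            (\<Sum>v \<in> {v. y < v}. D (e3 y y y) y y v * e3 x y v a b c)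
          + (\<Sum>u \<in> {u. u \<le> y}. D (e3 x y y) u y y * e3 u y y a b c))" .
next
  have xy: "x \<le> y" using assms(2) by simp
  have ins2: "{u. u \<le> x} = insert x {u. u < x}" by auto
  have Ixyy: "e3 x x y \<in> I3" "e3 x x x \<in> I3"
    using xy by (auto intro: e3_I3)
  have prod: "\<And>f g. f \<in> I3 \<Longrightarrow> g \<in> I3 \<Longrightarrow> D (mult3 f g) = (\<lambda>a b c. mult3 (D f) g a b c + mult3 f (D g) a b c)"
    using assms(1) unfolding derivation3_def by blast
  have "D (e3 x x y) = D (mult3 (e3 x x x) (e3 x x y))" by (rule arg_cong[where f=D, OF idem2[OF xy, symmetric]])
  also have "\<dots> = (\<lambda>a b c. mult3 (D (e3 x x x)) (e3 x x y) a b c + mult3 (e3 x x x) (D (e3 x x y)) a b c)"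
    using prod Ixyy by blast
  also have "\<dots> = (\<lambda>a b c.
            (\<Sum>v \<in> {v. x \<le> v}. D (e3 x x y) x x v * e3 x x v a b c)
          + (\<Sum>u \<in> {u. u < x}. D (e3 x x x) u x x * e3 u x y a b c))"
    unfolding multA[OF xy] multB[where x=x and y=x, OF order_refl] ins2
    by (simp add: Dediag[OF assms(1)] add.commute)
  finally show "D (e3 x x y) = (\<lambda>a b c.
            (\<Sum>v \<in> {v. x \<le> v}. D (e3 x x y) x x v * e3 x x v a b c)
          + (\<Sum>u \<in> {u. u < x}. D (e3 x x x) u x x * e3 u x y a b c))" .
qed

end
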